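(* Let $q>1$ and $0<u<1$. Consider the following random procedure (Affine Young Tableau Algorithm). Step 1 (Young Tableau Algorithm): start with $N=1$ and $\lambda$ the empty partition, and independent coins indexed by $i\ge1$, coin $i$ showing heads with probability $u/q^i$. Repeatedly flip coin $N$: if tails, set $N\leftarrow N+1$; if heads, choose a column $S$ with $\Pr(S=1)=\frac{q^{N-\lambda'_1}-1}{q^N-1}$ and $\Pr(S=s)=\frac{q^{N-\lambda'_s}-q^{N-\lambda'_{s-1}}}{q^N-1}$ for $s>1$, add one box to column $S$ of $\lambda$, and flip coin $N$ again. Let $\lambda$ be the resulting partition (the limit of this process). Step 2: choose $S$ with $\Pr(S=1)=q^{-\lambda'_1}$ and $\Pr(S=s)=q^{-\lambda'_s}-q^{-\lambda'_{s-1}}$ for $s>1$, and add one box to column $S$ of $\lambda$. Then the output partition is distributed according to $N_{u,q}$.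
   Context: For a partition $\lambda$, $\lambda'_s$ denotes the length of column $s$ of its diagram (the $s$-th part of the conjugate partition; $\lambda'_s=0$ beyond the last column); "adding a box to column $s$" increases $\lambda'_s$ by one (the stated probabilities vanish whenever this would not give a partition). $N_{u,q}(\lambda)=\prod_{r\ge1}(1-u/q^r)\frac{u^{|\lambda|-1}(q^{\lambda'_1}-1)}{\prod_i q^{(\lambda'_i)^2}(\frac1q)_{m_i(\lambda)}}$ for partitions $\lambda$ of positive integers, where $m_i(\lambda)$ is the multiplicity of part $i$ and $(\frac1q)_i=\prod_{j=1}^i(1-q^{-j})$. *)

theory Defs
  imports "HOL-Analysis.Analysis"
begin

text \<open>A partition is a weakly decreasing list of positive naturals (its parts / row lengths).\<close>
definition is_partition :: "nat list \<Rightarrow> bool" where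
  "is_partition xs \<longleftrightarrow> sorted_wrt (\<ge>) xs \<and> 0 \<notin> set xs"

definition col :: "nat list \<Rightarrow> nat \<Rightarrow> nat" where
  "col lam s = length (filter (\<lambda>x. s \<le> x) lam)"

definition mult :: "nat list \<Rightarrow> nat \<Rightarrow> nat" where
  "mult lam i = length (filter (\<lambda>x. x = i) lam)"

text \<open>Add a box to column s: the new box goes in row (col lam s + 1).
  (Only meaningful when the result is a partition; otherwise the
   probabilities used below vanish.)\<close>
definition add_box :: "nat list \<Rightarrow> nat \<Rightarrow> nat list" where
  "add_box lam s = (let c = col lam s in
      if c < length lam then lam[c := lam ! c + 1] else lam @ [1])"

definition col_prob1 :: "real \<Rightarrow> nat \<Rightarrow> nat list \<Rightarrow> nat \<Rightarrow> real" where
  "col_prob1 q N lam s =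
     (if s = 1 then (q powi (int N - int (col lam 1)) - 1) / (q ^ N - 1)
      else (q powi (int N - int (col lam s)) - q powi (int N - int (col lam (s - 1)))) / (q ^ N - 1))"

definition col_prob2 :: "real \<Rightarrow> nat list \<Rightarrow> nat \<Rightarrow> real" where
  "col_prob2 q lam s =
     (if s = 1 then 1 / q ^ col lam 1
      else 1 / q ^ col lam s - 1 / q ^ col lam (s - 1))"

text \<open>Expectation operators (acting on test functions g on partitions).
  Columns s > |lam| + 1 have probability zero, so the sum is over s = 1..|lam|+1.\<close>
definition box_op :: "real \<Rightarrow> nat \<Rightarrow> (nat list \<Rightarrow> real) \<Rightarrow> nat list \<Rightarrow> real" where
  "box_op q N g lam = (\<Sum>s = 1..Suc (sum_list lam). col_prob1 q N lam s * g (add_box lam s))"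

text \<open>Stage N: flip coin N (heads with probability u/q^N) repeatedly, adding a box on each
  head, until the first tail; exactly k heads occur with probability (u/q^N)^k (1 - u/q^N).\<close>
definition stage_op :: "real \<Rightarrow> real \<Rightarrow> nat \<Rightarrow> (nat list \<Rightarrow> real) \<Rightarrow> nat list \<Rightarrow> real" where
  "stage_op q u N g lam =
     (\<Sum>k. (u / q ^ N) ^ k * (1 - u / q ^ N) * ((box_op q N ^^ k) g) lam)"

text \<open>Run stages 1, ..., M: E[g(lambda after stage M)] starting from the state lam.\<close>
fun run_op :: "real \<Rightarrow> real \<Rightarrow> nat \<Rightarrow> (nat list \<Rightarrow> real) \<Rightarrow> nat list \<Rightarrow> real" where
  "run_op q u 0 g = g"
| "run_op q u (Suc M) g = run_op q u M (stage_op q u (Suc M) g)"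

definition step2_op :: "real \<Rightarrow> (nat list \<Rightarrow> real) \<Rightarrow> nat list \<Rightarrow> real" where
  "step2_op q g lam = (\<Sum>s = 1..Suc (sum_list lam). col_prob2 q lam s * g (add_box lam s))"

text \<open>Probability that the output equals mu when step 2 is applied to the partition
  obtained after coins 1..M of step 1 (starting from the empty partition).
  The limit M \<rightarrow> \<infinity> is the output distribution of the full algorithm.\<close>
definition out_prob :: "real \<Rightarrow> real \<Rightarrow> nat \<Rightarrow> nat list \<Rightarrow> real" where
  "out_prob q u M mu = run_op q u M (step2_op q (\<lambda>nu. if nu = mu then 1 else 0)) []"

definition qpoch :: "real \<Rightarrow> nat \<Rightarrow> real" where
  "qpoch q i = (\<Prod>j = 1..i. 1 - 1 / q ^ j)"

definition Nuq :: "real \<Rightarrow> real \<Rightarrow> nat list \<Rightarrow> real" where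
  "Nuq u q lam =
     (\<Prod>r. 1 - u / q ^ Suc r) *
     (u ^ (sum_list lam - 1) * (q ^ col lam 1 - 1) /
      (\<Prod>i = 1..sum_list lam. q ^ ((col lam i)\<^sup>2) * qpoch q (mult lam i)))"

end

theory Submission
  imports Defs
begin


lemma col_append[simp]: "col (xs @ ys) s = col xs s + col ys s"
  by (simp add: col_def)
lemma col_Cons[simp]: "col (x # xs) s = (if s \<le> x then 1 else 0) + col xs s"
  by (simp add: col_def)
lemma col_Nil[simp]: "col [] s = 0" by (simp add: col_def)
lemma mult_append[simp]: "mult (xs @ ys) s = mult xs s + mult ys s"
  by (simp add: mult_def)
lemma mult_Cons[simp]: "mult (x # xs) s = (if x = s then 1 else 0) + mult xs s"
  by (simp add: mult_def)
lemma mult_Nil[simp]: "mult [] s = 0" by (simp add: mult_def)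

lemma col_mult: "col xs i = col xs (Suc i) + mult xs i"
  by (induction xs) auto

lemma mult_eq_0: "mult xs i = 0 \<longleftrightarrow> i \<notin> set xs"
  by (induction xs) auto

lemma col_filter_nz: "1 \<le> t \<Longrightarrow> col (filter (\<lambda>x. x \<noteq> 0) xs) t = col xs t"
  by (induction xs) auto
lemma mult_filter_nz: "1 \<le> t \<Longrightarrow> mult (filter (\<lambda>x. x \<noteq> 0) xs) t = mult xs t"
  by (induction xs) auto

lemma sum_list_add_box: "sum_list (add_box lam s) = Suc (sum_list lam)"
  by (auto simp: add_box_def Let_def sum_list_update)

definition remb :: "nat list \<Rightarrow> nat \<Rightarrow> nat list" where
  "remb lam s = filter (\<lambda>x. x \<noteq> 0) (lam[col lam s - 1 := s - 1])"

definition small :: "nat list \<Rightarrow> nat \<Rightarrow> nat list \<Rightarrow> nat list" where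
  "small A s B = filter (\<lambda>x. x \<noteq> 0) (A @ (s - 1) # B)"

definition good :: "nat list \<Rightarrow> nat \<Rightarrow> nat list \<Rightarrow> bool" where
  "good A s B \<longleftrightarrow> is_partition (A @ s # B) \<and> (\<forall>x\<in>set A. s \<le> x) \<and> (\<forall>y\<in>set B. y < s)"

lemma good_facts:
  assumes "good A s B"
  shows "1 \<le> s" "0 \<notin> set A" "0 \<notin> set B" "sorted_wrt (\<ge>) A" "sorted_wrt (\<ge>) B"
    "s = 1 \<Longrightarrow> B = []"
  using assms unfolding good_def is_partition_def
  by (auto simp: sorted_wrt_append) (metis gr0I less_one neq_Nil_conv list.set_intros(1))

lemma filter_nz_id: "0 \<notin> set (xs::nat list) \<Longrightarrow> filter (\<lambda>x. x \<noteq> 0) xs = xs"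
  by (induction xs) auto
lemma filter_nz_id': "0 \<notin> set (xs::nat list) \<Longrightarrow> filter ((<) 0) xs = xs"
  by (induction xs) auto

lemma small_eq: "good A s B \<Longrightarrow> small A s B = A @ (if s = 1 then [] else [s - 1]) @ B"
proof -
  assume g: "good A s B"
  note f = good_facts[OF g]
  have "small A s B = A @ filter (\<lambda>x. x \<noteq> 0) [s - 1] @ B"
    unfolding small_def using f(2,3)
    by (simp add: filter_nz_id filter_nz_id')
  then show ?thesis using f by auto
qed

lemma col_A: "\<forall>x\<in>set A. s \<le> x \<Longrightarrow> col A s = length A"
  by (induction A) auto
lemma col_B: "\<forall>x\<in>set B. x < s \<Longrightarrow> col B s = 0"
  by (induction B) auto

lemma good_small_partition: "good A s B \<Longrightarrow> is_partition (small A s B)"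
proof -
  assume g: "good A s B"
  note f = good_facts[OF g]
  have As: "\<forall>x\<in>set A. s \<le> x" and Bs: "\<forall>y\<in>set B. y < s" using g unfolding good_def by auto
  show ?thesis
  proof (cases "s = 1")
    case True
    then show ?thesis using f small_eq[OF g] unfolding is_partition_def by simp
  next
    case False
    have "\<forall>y\<in>set B. y \<le> s - 1"
    proof
      fix y assume "y \<in> set B"
      then have "y < s" using Bs by auto
      then show "y \<le> s - 1" by linarith
    qed
    then have "sorted_wrt (\<ge>) ((s - 1) # B)" using f(5) by simp
    moreover have "\<forall>x\<in>set A. \<forall>y\<in>set ((s - 1) # B). y \<le> x" using As Bs by fastforce
    ultimately have "sorted_wrt (\<ge>) (A @ (s - 1) # B)" using f(4) sorted_wrt_append by blast
    moreover have "0 \<notin> set (A @ (s - 1) # B)" using f False by auto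
    ultimately show ?thesis using small_eq[OF g] False unfolding is_partition_def by simp
  qed
qed

lemma good_add_box: "good A s B \<Longrightarrow> add_box (small A s B) s = A @ s # B"
proof -
  assume g: "good A s B"
  note f = good_facts[OF g]
  have cA: "col A s = length A" using g col_A unfolding good_def by blast
  have cB: "col B s = 0" using g col_B unfolding good_def by blast
  show ?thesis
  proof (cases "s = 1")
    case True
    then show ?thesis using f cA small_eq[OF g] by (simp add: add_box_def)
  next
    case False
    have ns: "\<not> s \<le> s - 1" using f(1) by linarith
    have "Suc (s - 1) = s" using f(1) by linarith
    then show ?thesis using f cA cB small_eq[OF g] False ns
      by (simp add: add_box_def list_update_append nth_append)
  qed
qed

lemma good_remb: "good A s B \<Longrightarrow> remb (A @ s # B) s = small A s B"
proof -
  assume g: "good A s B"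
  have cA: "col A s = length A" using g col_A unfolding good_def by blast
  have cB: "col B s = 0" using g col_B unfolding good_def by blast
  show ?thesis using cA cB by (simp add: remb_def small_def list_update_append)
qed

lemma good_sum: "good A s B \<Longrightarrow> sum_list (A @ s # B) = Suc (sum_list (small A s B))"
  using small_eq[of A s B] good_facts[of A s B] by auto

lemma good_col: "good A s B \<Longrightarrow> 1 \<le> t \<Longrightarrow>
   col (A @ s # B) t = col (small A s B) t + (if t = s then 1 else 0)"
proof -
  assume "good A s B" "1 \<le> t"
  then have "col (small A s B) t = col (A @ (s-1) # B) t" unfolding small_def by (intro col_filter_nz)
  then show ?thesis using good_facts[OF \<open>good A s B\<close>] by auto
qed

lemma good_mult: "good A s B \<Longrightarrow> 1 \<le> t \<Longrightarrow>
   mult (A @ s # B) t + (if t = s - 1 then 1 else 0) = mult (small A s B) t + (if t = s then 1 else 0)"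
proof -
  assume "good A s B" "1 \<le> t"
  then have "mult (small A s B) t = mult (A @ (s-1) # B) t" unfolding small_def by (intro mult_filter_nz)
  then show ?thesis using good_facts[OF \<open>good A s B\<close>] \<open>1 \<le> t\<close> by auto
qed

lemma good_addable: "good A s B \<Longrightarrow> s = 1 \<or> s - 1 \<in> set (small A s B)"
  using small_eq[of A s B] by auto

lemma big_exists:
  fixes lam :: "nat list"
  assumes "sorted_wrt (\<ge>) lam" "s \<in> set lam"
  shows "\<exists>A B. lam = A @ s # B \<and> (\<forall>x\<in>set A. s \<le> x) \<and> (\<forall>y\<in>set B. y < s)"
  using assms
proof (induction lam)
  case Nil then show ?case by simp
next
  case (Cons x xs)
  show ?case
  proof (cases "s \<in> set xs")
    case True
    then obtain A B where "xs = A @ s # B" "\<forall>x\<in>set A. s \<le> x" "\<forall>y\<in>set B. y < s"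
      using Cons by auto
    moreover have "s \<le> x" using Cons.prems True by auto
    ultimately show ?thesis by (intro exI[of _ "x # A"] exI[of _ B]) auto
  next
    case False
    then have "x = s" using Cons.prems by auto
    have "\<forall>y\<in>set xs. y < s"
    proof
      fix y assume "y \<in> set xs"
      then have "y \<le> s" "y \<noteq> s" using Cons.prems False \<open>x = s\<close> by auto
      then show "y < s" by simp
    qed
    then show ?thesis using \<open>x = s\<close>
      by (intro exI[of _ "[]"] exI[of _ xs]) auto
  qed
qed

lemma small_exists:
  fixes lam :: "nat list"
  assumes "sorted_wrt (\<ge>) lam" "s - 1 \<in> set lam" "2 \<le> s"
  shows "\<exists>A B. lam = A @ (s - 1) # B \<and> (\<forall>x\<in>set A. s \<le> x) \<and> (\<forall>y\<in>set B. y < s)"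
  using assms
proof (induction lam)
  case Nil then show ?case by simp
next
  case (Cons x xs)
  show ?case
  proof (cases "x = s - 1")
    case False
    then have "s - 1 \<in> set xs" using Cons.prems by auto
    then obtain A B where "xs = A @ (s - 1) # B" "\<forall>x\<in>set A. s \<le> x" "\<forall>y\<in>set B. y < s"
      using Cons by auto
    moreover have "s - 1 \<le> x" using Cons.prems(1) \<open>s - 1 \<in> set xs\<close> by simp
    then have "s \<le> x" using False Cons.prems(3) by linarith
    ultimately show ?thesis by (intro exI[of _ "x # A"] exI[of _ B]) auto
  next
    case True
    then show ?thesis using Cons.prems
      by (intro exI[of _ "[]"] exI[of _ xs]) auto
  qed
qed

lemma partition_big:
  assumes "is_partition lam" "s \<in> set lam"
  obtains A B where "good A s B" "lam = A @ s # B"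
  using big_exists[of lam s] assms unfolding good_def is_partition_def by blast

lemma partition_small:
  assumes "is_partition nu" "s = 1 \<or> s - 1 \<in> set nu" "1 \<le> s"
  obtains A B where "good A s B" "nu = small A s B"
proof (cases "s = 1")
  case True
  have "\<forall>x\<in>set nu. s \<le> x" using assms True unfolding is_partition_def
    by (metis One_nat_def Suc_leI neq0_conv)
  then have "good nu s []" using assms True unfolding good_def is_partition_def
    by (auto simp: sorted_wrt_append)
  moreover have "nu = small nu s []" using assms True unfolding small_def is_partition_def
    by (simp add: filter_nz_id filter_nz_id')
  ultimately show ?thesis using that by blast
next
  case False
  then have "s - 1 \<in> set nu" "2 \<le> s" using assms by auto
  then obtain A B where AB: "nu = A @ (s - 1) # B" "\<forall>x\<in>set A. s \<le> x" "\<forall>y\<in>set B. y < s"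
    using small_exists[of nu s] assms unfolding is_partition_def by blast
  have "good A s B" using AB assms \<open>2 \<le> s\<close> unfolding good_def is_partition_def
    by (auto simp: sorted_wrt_append)
  moreover have "nu = small A s B" using AB assms unfolding small_def is_partition_def
    by (simp add: filter_nz_id filter_nz_id')
  ultimately show ?thesis using that by blast
qed



definition PL :: "nat \<Rightarrow> nat list set" where
  "PL n = {xs. is_partition xs \<and> sum_list xs \<le> n}"

lemma length_le_sum_list: "0 \<notin> set (xs::nat list) \<Longrightarrow> length xs \<le> sum_list xs"
  by (induction xs) auto

lemma finite_PL: "finite (PL n)"
proof -
  have "PL n \<subseteq> {xs. set xs \<subseteq> {0..n} \<and> length xs \<le> n}"
  proof
    fix xs assume "xs \<in> PL n"
    then have "is_partition xs" "sum_list xs \<le> n" by (auto simp: PL_def)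
    moreover have "\<forall>x\<in>set xs. x \<le> sum_list xs" using member_le_sum_list by blast
    moreover have "length xs \<le> sum_list xs" using \<open>is_partition xs\<close> length_le_sum_list
      unfolding is_partition_def by blast
    ultimately show "xs \<in> {xs. set xs \<subseteq> {0..n} \<and> length xs \<le> n}" by force
  qed
  then show ?thesis using finite_lists_length_le[of "{0..n}" n] finite_subset by blast
qed

lemma PL_mono: "m \<le> n \<Longrightarrow> PL m \<subseteq> PL n"
  by (auto simp: PL_def)

definition Bop :: "(nat list \<Rightarrow> nat \<Rightarrow> real) \<Rightarrow> (nat list \<Rightarrow> real) \<Rightarrow> nat list \<Rightarrow> real" where
  "Bop p g x = (\<Sum>s = 1..Suc (sum_list x). p x s * g (add_box x s))"

definition Badj :: "(nat list \<Rightarrow> nat \<Rightarrow> real) \<Rightarrow> (nat list \<Rightarrow> real) \<Rightarrow> nat list \<Rightarrow> real" where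
  "Badj p F lam = (\<Sum>s\<in>set lam. F (remb lam s) * p (remb lam s) s)"

definition vanish :: "nat \<Rightarrow> (nat list \<Rightarrow> real) \<Rightarrow> bool" where
  "vanish n g \<longleftrightarrow> (\<forall>x. n < sum_list x \<longrightarrow> g x = 0)"

definition pzero :: "(nat list \<Rightarrow> nat \<Rightarrow> real) \<Rightarrow> bool" where
  "pzero p \<longleftrightarrow> (\<forall>nu s. is_partition nu \<longrightarrow> 2 \<le> s \<longrightarrow> s - 1 \<notin> set nu \<longrightarrow> p nu s = 0)"

definition Ad :: "nat list \<Rightarrow> nat set" where
  "Ad x = {s \<in> {1..Suc (sum_list x)}. s = 1 \<or> s - 1 \<in> set x}"

lemma Bop_Ad:
  assumes "pzero p" "is_partition x"
  shows "Bop p g x = (\<Sum>s\<in>Ad x. p x s * g (add_box x s))"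
  unfolding Bop_def
proof (rule sum.mono_neutral_right)
  show "finite {1..Suc (sum_list x)}" by simp
  show "Ad x \<subseteq> {1..Suc (sum_list x)}" by (auto simp: Ad_def)
  show "\<forall>i\<in>{1..Suc (sum_list x)} - Ad x. p x i * g (add_box x i) = 0"
  proof
    fix i assume "i \<in> {1..Suc (sum_list x)} - Ad x"
    then have "2 \<le> i" "i - 1 \<notin> set x" by (auto simp: Ad_def)
    then show "p x i * g (add_box x i) = 0" using assms unfolding pzero_def by auto
  qed
qed

lemma adjoint:
  assumes "pzero p"
  shows "(\<Sum>x\<in>PL n. F x * Bop p g x) = (\<Sum>lam\<in>PL (Suc n). Badj p F lam * g lam)"
proof -
  let ?S = "Sigma (PL n) Ad" and ?T = "Sigma (PL (Suc n)) set"
  have fS: "finite (PL n)" "\<And>x. finite (Ad x)" using finite_PL by (auto simp: Ad_def)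
  have fT: "finite (PL (Suc n))" "\<And>x. finite (set x)" using finite_PL by auto
  have "(\<Sum>x\<in>PL n. F x * Bop p g x) = (\<Sum>x\<in>PL n. \<Sum>s\<in>Ad x. F x * p x s * g (add_box x s))"
    by (rule sum.cong) (auto simp: PL_def Bop_Ad[OF assms] sum_distrib_left mult.assoc)
  also have "\<dots> = (\<Sum>(x,s)\<in>?S. F x * p x s * g (add_box x s))"
    by (rule sum.Sigma) (use fS in auto)
  also have "\<dots> = (\<Sum>(lam,s)\<in>?T. F (remb lam s) * p (remb lam s) s * g lam)"
  proof (rule sum.reindex_bij_witness[where i = "\<lambda>(lam,s). (remb lam s, s)" and j = "\<lambda>(x,s). (add_box x s, s)"])
    fix a assume "a \<in> ?S"
    then obtain x s where a: "a = (x,s)" "is_partition x" "sum_list x \<le> n" "s \<in> Ad x"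
      by (auto simp: PL_def)
    then have s1: "1 \<le> s" "s = 1 \<or> s - 1 \<in> set x" by (auto simp: Ad_def)
    obtain A B where g: "good A s B" "x = small A s B" using partition_small[OF a(2) s1(2) s1(1)] by blast
    have ab: "add_box x s = A @ s # B" using g good_add_box by simp
    have rm: "remb (add_box x s) s = x" using ab g good_remb by simp
    show "(case (case a of (x, s) \<Rightarrow> (add_box x s, s)) of (lam, s) \<Rightarrow> (remb lam s, s)) = a"
      using a rm by simp
    have "is_partition (add_box x s)" using ab g(1) unfolding good_def by simp
    moreover have "sum_list (add_box x s) \<le> Suc n" using sum_list_add_box a by simp
    moreover have "s \<in> set (add_box x s)" using ab by simp
    ultimately show "(case a of (x, s) \<Rightarrow> (add_box x s, s)) \<in> ?T" using a by (simp add: PL_def)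
    show "(case (case a of (x, s) \<Rightarrow> (add_box x s, s)) of (lam, s) \<Rightarrow> F (remb lam s) * p (remb lam s) s * g lam) =
         (case a of (x, s) \<Rightarrow> F x * p x s * g (add_box x s))"
      using a rm by simp
  next
    fix b assume "b \<in> ?T"
    then obtain lam s where b: "b = (lam,s)" "is_partition lam" "sum_list lam \<le> Suc n" "s \<in> set lam"
      by (auto simp: PL_def)
    obtain A B where g: "good A s B" "lam = A @ s # B" using partition_big[OF b(2) b(4)] by blast
    have rm: "remb lam s = small A s B" using g good_remb by simp
    have ab: "add_box (remb lam s) s = lam" using rm g good_add_box by simp
    show "(case (case b of (lam, s) \<Rightarrow> (remb lam s, s)) of (x, s) \<Rightarrow> (add_box x s, s)) = b"
      using b ab by simp
    have "is_partition (remb lam s)" using rm g good_small_partition by simp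
    moreover have "sum_list lam = Suc (sum_list (remb lam s))" using rm g good_sum by simp
    moreover have "s \<le> sum_list lam" using b(4) member_le_sum_list by blast
    moreover have "1 \<le> s" using good_facts[OF g(1)] by simp
    moreover have "s = 1 \<or> s - 1 \<in> set (remb lam s)" using rm good_addable[OF g(1)] by simp
    ultimately show "(case b of (lam, s) \<Rightarrow> (remb lam s, s)) \<in> ?S" using b
      by (simp add: PL_def Ad_def)
  qed
  also have "\<dots> = (\<Sum>lam\<in>PL (Suc n). \<Sum>s\<in>set lam. F (remb lam s) * p (remb lam s) s * g lam)"
    by (rule sum.Sigma[symmetric]) (use fT in auto)
  also have "\<dots> = (\<Sum>lam\<in>PL (Suc n). Badj p F lam * g lam)"
    by (simp add: Badj_def sum_distrib_right)
  finally show ?thesis .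
qed

lemma vanish_restrict:
  assumes "vanish n g"
  shows "(\<Sum>lam\<in>PL (Suc n). X lam * g lam) = (\<Sum>lam\<in>PL n. X lam * g lam)"
proof (rule sum.mono_neutral_right[OF finite_PL PL_mono])
  show "\<forall>i\<in>PL (Suc n) - PL n. X i * g i = 0"
  proof
    fix i assume "i \<in> PL (Suc n) - PL n"
    then have "n < sum_list i" by (auto simp: PL_def)
    then show "X i * g i = 0" using assms by (simp add: vanish_def)
  qed
qed simp

lemma Bop_pow_zero:
  assumes "vanish n g" "n < sum_list x + k"
  shows "(Bop p ^^ k) g x = 0"
  using assms(2)
proof (induction k arbitrary: x)
  case 0 then show ?case using assms(1) by (simp add: vanish_def)
next
  case (Suc k)
  have "(Bop p ^^ Suc k) g x = Bop p ((Bop p ^^ k) g) x" by simp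
  also have "\<dots> = 0" unfolding Bop_def[of p "(Bop p ^^ k) g" x]
  proof (rule sum.neutral, rule ballI)
    fix s
    have "(Bop p ^^ k) g (add_box x s) = 0"
      by (rule Suc.IH) (use Suc.prems in \<open>simp add: sum_list_add_box\<close>)
    then show "p x s * (Bop p ^^ k) g (add_box x s) = 0" by simp
  qed
  finally show ?case .
qed

lemma Bop_sum: "Bop p (\<lambda>y. \<Sum>k\<in>K. c k * G k y) x = (\<Sum>k\<in>K. c k * Bop p (G k) x)"
proof -
  let ?I = "{1..Suc (sum_list x)}"
  have "Bop p (\<lambda>y. \<Sum>k\<in>K. c k * G k y) x = (\<Sum>s\<in>?I. \<Sum>k\<in>K. p x s * (c k * G k (add_box x s)))"
    unfolding Bop_def by (rule sum.cong[OF refl]) (rule sum_distrib_left)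
  also have "\<dots> = (\<Sum>k\<in>K. \<Sum>s\<in>?I. p x s * (c k * G k (add_box x s)))"
    by (rule sum.swap)
  also have "\<dots> = (\<Sum>k\<in>K. c k * Bop p (G k) x)"
    unfolding Bop_def
    by (rule sum.cong[OF refl]) (simp only: sum_distrib_left mult.left_commute)
  finally show ?thesis .
qed

definition Eop :: "(nat list \<Rightarrow> nat \<Rightarrow> real) \<Rightarrow> real \<Rightarrow> nat \<Rightarrow> (nat list \<Rightarrow> real) \<Rightarrow> nat list \<Rightarrow> real" where
  "Eop p h n g x = (\<Sum>k\<le>n. h ^ k * (Bop p ^^ k) g x)"

lemma Eop_vanish: "vanish n g \<Longrightarrow> vanish n (Eop p h n g)"
  unfolding vanish_def Eop_def
  by (auto intro!: sum.neutral Bop_pow_zero[unfolded vanish_def])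

lemma Eop_eq:
  assumes "vanish n g"
  shows "Eop p h n g x = g x + h * Bop p (Eop p h n g) x"
proof -
  have "h * Bop p (Eop p h n g) x = (\<Sum>k\<le>n. h ^ Suc k * (Bop p ^^ Suc k) g x)"
    unfolding Eop_def Bop_sum by (simp add: sum_distrib_left mult_ac)
  also have "\<dots> = (\<Sum>k\<le>Suc n. h ^ k * (Bop p ^^ k) g x) - g x"
    by (subst sum.atMost_Suc_shift) simp
  also have "\<dots> = Eop p h n g x - g x"
    using Bop_pow_zero[OF assms, of x "Suc n" p] by (simp add: Eop_def)
  finally show ?thesis by simp
qed

lemma stage_abstract:
  assumes "vanish n g" "pzero p"
    and loc: "\<And>lam. lam \<in> PL n \<Longrightarrow> (1 - h) * F lam = G lam - h * Badj p G lam"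
  shows "(\<Sum>x\<in>PL n. F x * ((1 - h) * Eop p h n g x)) = (\<Sum>x\<in>PL n. G x * g x)"
proof -
  let ?E = "Eop p h n g"
  have vE: "vanish n ?E" using Eop_vanish[OF assms(1)] .
  have "(\<Sum>x\<in>PL n. F x * ((1 - h) * ?E x)) = (\<Sum>x\<in>PL n. (G x - h * Badj p G x) * ?E x)"
    by (rule sum.cong) (auto simp: loc[symmetric])
  also have "\<dots> = (\<Sum>x\<in>PL n. G x * ?E x) - h * (\<Sum>x\<in>PL n. Badj p G x * ?E x)"
    by (simp add: algebra_simps sum_subtractf sum_distrib_left)
  also have "(\<Sum>x\<in>PL n. Badj p G x * ?E x) = (\<Sum>x\<in>PL n. G x * Bop p ?E x)"
    using adjoint[OF assms(2), where n=n and F=G and g="?E"] vanish_restrict[OF vE] by simp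
  also have "(\<Sum>x\<in>PL n. G x * ?E x) - h * (\<Sum>x\<in>PL n. G x * Bop p ?E x)
      = (\<Sum>x\<in>PL n. G x * (?E x - h * Bop p ?E x))"
    by (simp add: algebra_simps sum_subtractf sum_distrib_left)
  also have "\<dots> = (\<Sum>x\<in>PL n. G x * g x)"
    using Eop_eq[OF assms(1)] by simp
  finally show ?thesis .
qed



definition Wt :: "real \<Rightarrow> nat \<Rightarrow> nat list \<Rightarrow> real" where
  "Wt q K lam = (\<Prod>i=1..K. q ^ ((col lam i)\<^sup>2) * qpoch q (mult lam i))"

lemma qpoch_Suc: "qpoch q (Suc m) = qpoch q m * (1 - 1 / q ^ Suc m)"
  by (simp add: qpoch_def)

lemma qpoch_0: "qpoch q 0 = 1" by (simp add: qpoch_def)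

lemma qpoch_pos: "1 < q \<Longrightarrow> 0 < qpoch q m"
  unfolding qpoch_def
proof (rule prod_pos)
  fix j assume "1 < q" "j \<in> {1..m}"
  then have "1 < q ^ j" by (simp add: one_less_power)
  then show "0 < 1 - 1 / q ^ j" by simp
qed

lemma Wt_pos: "1 < q \<Longrightarrow> 0 < Wt q K lam"
  unfolding Wt_def by (intro prod_pos) (simp add: qpoch_pos)

lemma col_big: "sum_list lam < i \<Longrightarrow> col lam i = 0"
  unfolding col_def using member_le_sum_list[of _ lam]
  by (auto simp: filter_empty_conv) (meson le_trans not_le)

lemma mult_big: "sum_list lam < i \<Longrightarrow> mult lam i = 0"
  unfolding mult_def using member_le_sum_list[of _ lam]
  by (auto simp: filter_empty_conv) (meson le_trans not_le)

lemma Wt_ext: "sum_list lam \<le> K \<Longrightarrow> Wt q K lam = Wt q (sum_list lam) lam"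
  unfolding Wt_def
proof (rule prod.mono_neutral_right)
  assume "sum_list lam \<le> K"
  show "finite {1..K}" by simp
  show "{1..sum_list lam} \<subseteq> {1..K}" using \<open>sum_list lam \<le> K\<close> by auto
  show "\<forall>i\<in>{1..K} - {1..sum_list lam}. q ^ (col lam i)\<^sup>2 * qpoch q (mult lam i) = 1"
    by (auto simp: col_big mult_big qpoch_0)
qed

lemma aux1: "(Z::real) > 0 \<Longrightarrow> q > 0 \<Longrightarrow> X = Y * Z \<Longrightarrow>
   A * X * (q * X) * (P * (1 - 1 / (q * Z))) = A * P * (X * (q * X - Y))"
  by (simp add: field_simps)

definition Ef :: "real \<Rightarrow> nat list \<Rightarrow> nat \<Rightarrow> real" where
  "Ef q lam s = (if s = 1 then 1 else 1 - 1 / q ^ (col lam (s - 1) - col lam s + 1))"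

lemma W_rel:
  assumes q: "1 < q" and g: "good A s B" and sK: "s \<le> K"
  shows "Wt q K (A @ s # B) * Ef q (A @ s # B) s
       = Wt q K (small A s B) * (q ^ (col (A @ s # B) s - 1) *
            (q ^ col (A @ s # B) s - q ^ col (A @ s # B) (Suc s)))"
proof -
  let ?L = "A @ s # B" and ?S = "small A s B"
  have s1: "1 \<le> s" using good_facts[OF g] by simp
  define fb where "fb i = q ^ ((col ?L i)\<^sup>2) * qpoch q (mult ?L i)" for i
  define fs where "fs i = q ^ ((col ?S i)\<^sup>2) * qpoch q (mult ?S i)" for i
  define e where "e i = (if i = s - 1 then Ef q ?L s else 1)" for i
  define d where "d i = (if i = s then q ^ (col ?L s - 1) * (q ^ col ?L s - q ^ col ?L (Suc s)) else 1)" for i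
  have colS: "\<And>t. 1 \<le> t \<Longrightarrow> col ?L t = col ?S t + (if t = s then 1 else 0)"
    using good_col[OF g] by simp
  have multS: "\<And>t. 1 \<le> t \<Longrightarrow> mult ?L t + (if t = s - 1 then 1 else 0) = mult ?S t + (if t = s then 1 else 0)"
    using good_mult[OF g] by simp
  have pt: "fb i * e i = fs i * d i" if i: "i \<in> {1..K}" for i
  proof -
    have i1: "1 \<le> i" using i by simp
    consider (eqs) "i = s" | (im) "i = s - 1" "2 \<le> s" | (oth) "i \<noteq> s" "i \<noteq> s - 1"
    proof -
      have "i = s \<or> (i = s - 1 \<and> 2 \<le> s) \<or> (i \<noteq> s \<and> i \<noteq> s - 1)" using s1 i1 by arith
      then show "(i = s \<Longrightarrow> thesis) \<Longrightarrow> (i = s - 1 \<Longrightarrow> 2 \<le> s \<Longrightarrow> thesis) \<Longrightarrow> (i \<noteq> s \<Longrightarrow> i \<noteq> s - 1 \<Longrightarrow> thesis) \<Longrightarrow> thesis" by blast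
    qed
    then show ?thesis
    proof cases
      case eqs
      have c: "col ?L s = Suc (col ?S s)" using colS[OF s1] by simp
      have m: "mult ?L s = Suc (mult ?S s)" using multS[OF s1] s1 by (simp split: if_splits)
      have c1: "col ?L s = col ?L (Suc s) + mult ?L s" by (rule col_mult)
      have e1: "e s = 1" using s1 by (simp add: e_def Ef_def)
      have cm: "col ?S s = col ?L (Suc s) + mult ?S s" using c1 c m by simp
      have XYZ: "q ^ col ?S s = q ^ col ?L (Suc s) * q ^ mult ?S s" using cm by (simp add: power_add)
      have sq: "(Suc (col ?S s))\<^sup>2 = (col ?S s)\<^sup>2 + col ?S s + Suc (col ?S s)"
        by (simp add: power2_eq_square)
      have "fb i * e i = q ^ ((col ?S s)\<^sup>2) * q ^ (col ?S s) * (q * q ^ (col ?S s))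
             * (qpoch q (mult ?S s) * (1 - 1 / (q * q ^ mult ?S s)))"
        unfolding fb_def eqs e1 c m sq qpoch_Suc by (simp add: power_add)
      also have "\<dots> = q ^ ((col ?S s)\<^sup>2) * qpoch q (mult ?S s) * (q ^ (col ?S s) * (q * q ^ (col ?S s) - q ^ col ?L (Suc s)))"
        by (rule aux1[OF _ _ XYZ]) (use q in auto)
      also have "\<dots> = fs i * d i"
        unfolding fs_def d_def eqs c by simp
      finally show ?thesis .
    next
      case im
      have c: "col ?L i = col ?S i" using colS[OF i1] im by simp
      have m: "mult ?S i = Suc (mult ?L i)" using multS[OF i1] im by simp
      have c1: "col ?L (s - 1) = col ?L s + mult ?L (s - 1)"
        using col_mult[of ?L "s - 1"] im(2) Suc_diff_1[of s] by simp
      have ei: "e i = 1 - 1 / q ^ Suc (mult ?L i)" using im c1 by (simp add: e_def Ef_def)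
      have di: "d i = 1" using im by (simp add: d_def)
      show ?thesis using c m ei di by (simp add: fb_def fs_def qpoch_Suc)
    next
      case oth
      have z1: "(if i = s - 1 then 1 else 0) = (0::nat)" "(if i = s then 1 else 0) = (0::nat)"
        using oth by auto
      have c: "col ?L i = col ?S i" using colS[OF i1] unfolding z1 by simp
      have m: "mult ?S i = mult ?L i" using multS[OF i1] unfolding z1 by simp
      have "e i = 1" "d i = 1" using oth by (auto simp: e_def d_def)
      then show ?thesis unfolding fb_def fs_def c m by simp
    qed
  qed
  have "(\<Prod>i=1..K. fb i) * (\<Prod>i=1..K. e i) = (\<Prod>i=1..K. fs i) * (\<Prod>i=1..K. d i)"
    using pt by (simp add: prod.distrib[symmetric])
  moreover have "(\<Prod>i=1..K. e i) = Ef q ?L s"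
  proof (cases "s = 1")
    case True
    then show ?thesis by (simp add: e_def Ef_def)
  next
    case False
    then have "s - 1 \<in> {1..K}" using s1 sK by auto
    then show ?thesis unfolding e_def by simp
  qed
  moreover have "(\<Prod>i=1..K. d i) = q ^ (col ?L s - 1) * (q ^ col ?L s - q ^ col ?L (Suc s))"
    using s1 sK unfolding d_def by simp
  ultimately show ?thesis by (simp add: Wt_def fb_def fs_def)
qed



definition phi :: "real \<Rightarrow> nat \<Rightarrow> nat \<Rightarrow> real" where
  "phi q M c = (\<Prod>i<c. 1 - 1 / q ^ (M - i))"

definition PP :: "real \<Rightarrow> real \<Rightarrow> nat \<Rightarrow> real" where
  "PP q u M = (\<Prod>r<M. 1 - u / q ^ Suc r)"

definition fM :: "real \<Rightarrow> real \<Rightarrow> nat \<Rightarrow> nat list \<Rightarrow> real" where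
  "fM q u M lam = PP q u M * u ^ sum_list lam * phi q M (col lam 1) / Wt q (sum_list lam) lam"

lemma phi_Suc: "phi q M (Suc c) = phi q M c * (1 - 1 / q ^ (M - c))"
  by (simp add: phi_def)

lemma phi_0: "phi q M 0 = 1" by (simp add: phi_def)

lemma phi_zero: "M < c \<Longrightarrow> phi q M c = 0"
  unfolding phi_def by (intro prod_zero) (auto intro!: bexI[of _ M])


lemma phi_step:
  assumes "0 < q"
  shows "phi q N c * (q ^ N - q ^ c) = phi q N (Suc c) * q ^ N"
proof (cases "c \<le> N")
  case True
  then obtain d where N: "N = c + d" using le_Suc_ex by blast
  have y: "q ^ d \<noteq> 0" using assms by simp
  have "phi q N c * (q ^ c * q ^ d - q ^ c) = phi q N c * (1 - 1 / q ^ d) * (q ^ c * q ^ d)"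
    using y assms by (simp add: field_simps)
  then show ?thesis using N by (simp add: phi_Suc power_add)
next
  case False
  then show ?thesis by (simp add: phi_zero)
qed

lemma aux4: "(q::real) > 0 \<Longrightarrow> x > 0 \<Longrightarrow> y > 0 \<Longrightarrow>
   (x * y * q - x) * (1 - 1 / y) = (1 - 1 / (y * q)) * (x * y * q - q * x)"
  by (simp add: field_simps)

lemma phi_M:
  assumes "1 < q"
  shows "phi q M c * (q ^ Suc M - 1) = phi q (Suc M) c * (q ^ Suc M - q ^ c)"
proof (induction c)
  case 0 then show ?case by (simp add: phi_0)
next
  case (Suc c)
  have key: "(q ^ Suc M - q ^ c) * (1 - 1 / q ^ (M - c)) = (1 - 1 / q ^ (Suc M - c)) * (q ^ Suc M - q ^ Suc c)"
  proof (cases "c \<le> M")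
    case True
    then obtain d where M: "M = c + d" using le_Suc_ex by blast
    have "Suc M - c = Suc d" "M - c = d" using M by auto
    moreover have "q ^ M = q ^ c * q ^ d" using M by (simp add: power_add)
    moreover have "q ^ Suc c = q * q ^ c" by simp
    moreover have "(q ^ c * q ^ d * q - q ^ c) * (1 - 1 / q ^ d) = (1 - 1 / (q ^ d * q)) * (q ^ c * q ^ d * q - q * q ^ c)"
      by (rule aux4) (use assms in auto)
    ultimately show ?thesis by (simp add: mult_ac)
  next
    case False
    then show ?thesis by simp
  qed
  have "phi q M (Suc c) * (q ^ Suc M - 1) = phi q M c * (q ^ Suc M - 1) * (1 - 1 / q ^ (M - c))"
    by (simp add: phi_Suc)
  also have "\<dots> = phi q (Suc M) c * ((q ^ Suc M - q ^ c) * (1 - 1 / q ^ (M - c)))"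
    using Suc.IH by simp
  also have "\<dots> = phi q (Suc M) (Suc c) * (q ^ Suc M - q ^ Suc c)"
    unfolding key by (simp add: phi_Suc[of q "Suc M" c])
  finally show ?case .
qed

lemma PP_Suc: "PP q u (Suc M) = PP q u M * (1 - u / q ^ Suc M)"
  by (simp add: PP_def)

lemma tele:
  assumes "is_partition lam"
  shows "(\<Sum>s\<in>set lam. q ^ col lam s - q ^ col lam (Suc s)) = (q::real) ^ col lam 1 - 1"
proof -
  let ?n = "sum_list lam"
  have "(\<Sum>s\<in>set lam. q ^ col lam s - q ^ col lam (Suc s)) = (\<Sum>s=1..?n. q ^ col lam s - q ^ col lam (Suc s))"
  proof (rule sum.mono_neutral_left)
    show "set lam \<subseteq> {1..?n}" using assms member_le_sum_list[of _ lam] unfolding is_partition_def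
      by (auto simp: Suc_le_eq intro: gr0I)
    show "\<forall>i\<in>{1..?n} - set lam. q ^ col lam i - q ^ col lam (Suc i) = 0"
    proof
      fix i assume "i \<in> {1..?n} - set lam"
      then have "mult lam i = 0" using mult_eq_0 by auto
      then have "col lam i = col lam (Suc i)" using col_mult[of lam i] by simp
      then show "q ^ col lam i - q ^ col lam (Suc i) = 0" by simp
    qed
  qed simp
  also have "\<dots> = - (\<Sum>s=1..?n. q ^ col lam (Suc s) - q ^ col lam s)"
    by (simp add: sum_negf[symmetric])
  also have "\<dots> = q ^ col lam 1 - q ^ col lam (Suc ?n)"
    by (subst sum_Suc_diff) auto
  also have "col lam (Suc ?n) = 0" by (rule col_big) simp
  finally show ?thesis by simp
qed

lemma corner:
  assumes "is_partition lam" "s \<in> set lam" "1 < q"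
  shows "is_partition (remb lam s)" "sum_list (remb lam s) = sum_list lam - 1" "1 \<le> sum_list lam"
    "1 \<le> s" "s \<le> sum_list lam"
    "1 \<le> col lam s" "col (remb lam s) s = col lam s - 1"
    "col (remb lam s) 1 = (if s = 1 then col lam 1 - 1 else col lam 1)"
    "2 \<le> s \<Longrightarrow> col (remb lam s) (s - 1) = col lam (s - 1)"
    "2 \<le> s \<Longrightarrow> col lam s \<le> col lam (s - 1)"
    "Wt q (sum_list lam) lam * Ef q lam s = Wt q (sum_list (remb lam s)) (remb lam s) *
        (q ^ (col lam s - 1) * (q ^ col lam s - q ^ col lam (Suc s)))"
proof -
  obtain A B where g: "good A s B" "lam = A @ s # B" using partition_big[OF assms(1,2)] by blast
  have rm: "remb lam s = small A s B" using g good_remb by simp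
  show "is_partition (remb lam s)" using rm g good_small_partition by simp
  have sm: "sum_list lam = Suc (sum_list (remb lam s))" using rm g good_sum by simp
  then show "sum_list (remb lam s) = sum_list lam - 1" "1 \<le> sum_list lam" by auto
  show s1: "1 \<le> s" using good_facts[OF g(1)] by simp
  show sn: "s \<le> sum_list lam" using assms(2) member_le_sum_list by blast
  have cs: "col lam s = col (remb lam s) s + 1" using good_col[OF g(1) s1] g rm by simp
  then show "1 \<le> col lam s" "col (remb lam s) s = col lam s - 1" by auto
  show "col (remb lam s) 1 = (if s = 1 then col lam 1 - 1 else col lam 1)"
    using good_col[OF g(1), of 1] g rm by auto
  show "2 \<le> s \<Longrightarrow> col (remb lam s) (s - 1) = col lam (s - 1)"
    using good_col[OF g(1), of "s - 1"] g rm by auto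
  show "2 \<le> s \<Longrightarrow> col lam s \<le> col lam (s - 1)"
    using col_mult[of lam "s - 1"] by simp
  have "Wt q (sum_list lam) lam * Ef q lam s = Wt q (sum_list lam) (remb lam s) *
        (q ^ (col lam s - 1) * (q ^ col lam s - q ^ col lam (Suc s)))"
    using W_rel[OF assms(3) g(1) sn] g rm by simp
  also have "Wt q (sum_list lam) (remb lam s) = Wt q (sum_list (remb lam s)) (remb lam s)"
    by (rule Wt_ext) (use sm in simp)
  finally show "Wt q (sum_list lam) lam * Ef q lam s = Wt q (sum_list (remb lam s)) (remb lam s) *
        (q ^ (col lam s - 1) * (q ^ col lam s - q ^ col lam (Suc s)))" .
qed



lemma powi_conv: "(q::real) \<noteq> 0 \<Longrightarrow> q powi (int N - int c) = q ^ N / q ^ c"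
  by (simp add: power_int_diff)

lemma aux_pow: "(q::real) > 0 \<Longrightarrow> 1 / q ^ a - 1 / q ^ (a + k) = (1 - 1 / q ^ k) / q ^ a"
  by (simp add: power_add field_simps)

lemma p2_rel:
  assumes "is_partition lam" "s \<in> set lam" "1 < q"
  shows "col_prob2 q (remb lam s) s = Ef q lam s / q ^ (col lam s - 1)"
proof (cases "s = 1")
  case True
  then show ?thesis using corner[OF assms] by (simp add: col_prob2_def Ef_def)
next
  case False
  then have s2: "2 \<le> s" using corner(4)[OF assms] by simp
  note c = corner[OF assms]
  define a where "a = col lam s - 1"
  define k where "k = col lam (s - 1) - col lam s + 1"
  have ak: "col lam (s - 1) = a + k" using c(6) c(10)[OF s2] by (simp add: a_def k_def)
  have "col_prob2 q (remb lam s) s = 1 / q ^ a - 1 / q ^ (a + k)"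
    using False c(7) c(9)[OF s2] ak by (simp add: col_prob2_def a_def)
  also have "\<dots> = (1 - 1 / q ^ k) / q ^ a" using assms(3) by (intro aux_pow) simp
  finally show ?thesis using False by (simp add: Ef_def k_def a_def)
qed

lemma p1_rel:
  assumes "is_partition lam" "s \<in> set lam" "1 < q"
  shows "phi q N (col (remb lam s) 1) * col_prob1 q N (remb lam s) s
       = phi q N (col lam 1) * q ^ N * Ef q lam s / (q ^ (col lam s - 1) * (q ^ N - 1))"
proof (cases "s = 1")
  case True
  note c = corner[OF assms]
  define a where "a = col lam 1 - 1"
  have sa: "Suc a = col lam 1" using c(6) True by (simp add: a_def)
  have q0: "q \<noteq> 0" "q ^ a \<noteq> 0" using assms(3) by auto
  have "phi q N (col (remb lam s) 1) * col_prob1 q N (remb lam s) s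
      = phi q N a * (q ^ N / q ^ a - 1) / (q ^ N - 1)"
    using True c(8) q0 by (simp add: col_prob1_def powi_conv a_def)
  also have "phi q N a * (q ^ N / q ^ a - 1) = phi q N a * (q ^ N - q ^ a) / q ^ a"
    using q0 by (simp add: field_simps)
  also have "phi q N a * (q ^ N - q ^ a) = phi q N (Suc a) * q ^ N"
    using assms(3) by (intro phi_step) simp
  finally show ?thesis using True sa by (simp add: Ef_def a_def)
next
  case False
  then have s2: "2 \<le> s" using corner(4)[OF assms] by simp
  note c = corner[OF assms]
  define a where "a = col lam s - 1"
  define k where "k = col lam (s - 1) - col lam s + 1"
  have ak: "col lam (s - 1) = a + k" using c(6) c(10)[OF s2] by (simp add: a_def k_def)
  have q0: "q \<noteq> 0" using assms(3) by auto
  have "col_prob1 q N (remb lam s) s = (q ^ N / q ^ a - q ^ N / q ^ (a + k)) / (q ^ N - 1)"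
  proof -
    have pw1: "q powi (int N - int (col (remb lam s) s)) = q ^ N / q ^ a"
      using c(7) powi_conv[OF q0] by (simp add: a_def)
    have pw2: "q powi (int N - int (col (remb lam s) (s - 1))) = q ^ N / q ^ (a + k)"
      using c(9)[OF s2] ak powi_conv[OF q0, of N "a + k"] by simp
    show ?thesis unfolding col_prob1_def pw1 pw2 using False by simp
  qed
  also have "q ^ N / q ^ a - q ^ N / q ^ (a + k) = q ^ N * (1 / q ^ a - 1 / q ^ (a + k))"
    by (simp add: field_simps)
  also have "1 / q ^ a - 1 / q ^ (a + k) = (1 - 1 / q ^ k) / q ^ a" using assms(3) by (intro aux_pow) simp
  finally show ?thesis using False c(8) by (simp add: Ef_def k_def a_def)
qed

lemma Ef_pos: "1 < q \<Longrightarrow> 0 < Ef q lam s"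
proof -
  assume q: "1 < q"
  have "1 < q ^ (col lam (s - 1) - col lam s + 1)" using q by (intro one_less_power) auto
  then show ?thesis by (simp add: Ef_def)
qed

lemma aux2: "(W1::real) * E = W2 * (Y * D) \<Longrightarrow> W1 > 0 \<Longrightarrow> W2 > 0 \<Longrightarrow> Y > 0 \<Longrightarrow>
   E / (W2 * Y) = D / W1"
  by (simp add: field_simps)

lemma ratio:
  assumes "is_partition lam" "s \<in> set lam" "1 < q"
  shows "Ef q lam s / (Wt q (sum_list (remb lam s)) (remb lam s) * q ^ (col lam s - 1))
       = (q ^ col lam s - q ^ col lam (Suc s)) / Wt q (sum_list lam) lam"
  by (rule aux2[OF corner(11)[OF assms]]) (use assms(3) Wt_pos in auto)

lemma term1:
  assumes "is_partition lam" "s \<in> set lam" "1 < q"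
  shows "fM q u N (remb lam s) * col_prob1 q N (remb lam s) s
      = PP q u N * u ^ (sum_list lam - 1) * phi q N (col lam 1) * q ^ N / (q ^ N - 1)
        * ((q ^ col lam s - q ^ col lam (Suc s)) / Wt q (sum_list lam) lam)"
proof -
  let ?r = "remb lam s"
  have "fM q u N ?r * col_prob1 q N ?r s
     = PP q u N * u ^ sum_list ?r / Wt q (sum_list ?r) ?r * (phi q N (col ?r 1) * col_prob1 q N ?r s)"
    by (simp add: fM_def)
  also have "\<dots> = PP q u N * u ^ (sum_list lam - 1) * phi q N (col lam 1) * q ^ N / (q ^ N - 1)
       * (Ef q lam s / (Wt q (sum_list ?r) ?r * q ^ (col lam s - 1)))"
    unfolding p1_rel[OF assms] corner(2)[OF assms] by (simp add: field_simps)
  also have "\<dots> = PP q u N * u ^ (sum_list lam - 1) * phi q N (col lam 1) * q ^ N / (q ^ N - 1)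
        * ((q ^ col lam s - q ^ col lam (Suc s)) / Wt q (sum_list lam) lam)"
    unfolding ratio[OF assms] ..
  finally show ?thesis .
qed

definition finf :: "real \<Rightarrow> real \<Rightarrow> real \<Rightarrow> nat list \<Rightarrow> real" where
  "finf q u P lam = P * u ^ sum_list lam / Wt q (sum_list lam) lam"

lemma term2:
  assumes "is_partition lam" "s \<in> set lam" "1 < q"
  shows "finf q u P (remb lam s) * col_prob2 q (remb lam s) s
      = P * u ^ (sum_list lam - 1) * ((q ^ col lam s - q ^ col lam (Suc s)) / Wt q (sum_list lam) lam)"
proof -
  let ?r = "remb lam s"
  have "finf q u P ?r * col_prob2 q ?r s
     = P * u ^ (sum_list lam - 1) * (Ef q lam s / (Wt q (sum_list ?r) ?r * q ^ (col lam s - 1)))"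
    unfolding finf_def p2_rel[OF assms] corner(2)[OF assms] by simp
  also have "\<dots> = P * u ^ (sum_list lam - 1) * ((q ^ col lam s - q ^ col lam (Suc s)) / Wt q (sum_list lam) lam)"
    unfolding ratio[OF assms] ..
  finally show ?thesis .
qed




lemma partition_empty: "is_partition lam \<Longrightarrow> sum_list lam = 0 \<Longrightarrow> lam = []"
  unfolding is_partition_def by (cases lam) auto

lemma col1_pos: "is_partition lam \<Longrightarrow> lam \<noteq> [] \<Longrightarrow> 0 < col lam 1"
  unfolding is_partition_def col_def by (cases lam) (auto simp: Suc_le_eq)

lemma L1:
  fixes u q :: real and M :: nat
  assumes q: "1 < q" and lam: "is_partition lam"
  defines "h \<equiv> u / q ^ Suc M"
  shows "(1 - h) * fM q u M lam = fM q u (Suc M) lam - h * Badj (col_prob1 q (Suc M)) (fM q u (Suc M)) lam"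
proof -
  let ?N = "Suc M" and ?n = "sum_list lam" and ?c = "col lam 1" and ?W = "Wt q (sum_list lam) lam"
  have "Badj (col_prob1 q ?N) (fM q u ?N) lam
      = (\<Sum>s\<in>set lam. PP q u ?N * u ^ (?n - 1) * phi q ?N ?c * q ^ ?N / (q ^ ?N - 1)
        * ((q ^ col lam s - q ^ col lam (Suc s)) / ?W))"
    unfolding Badj_def by (rule sum.cong) (auto simp: term1[OF lam _ q])
  also have "\<dots> = PP q u ?N * u ^ (?n - 1) * phi q ?N ?c * q ^ ?N / (q ^ ?N - 1) / ?W
       * (\<Sum>s\<in>set lam. q ^ col lam s - q ^ col lam (Suc s))"
    by (simp add: sum_distrib_left sum_divide_distrib)
  also have "\<dots> = PP q u ?N * u ^ (?n - 1) * phi q ?N ?c * q ^ ?N / (q ^ ?N - 1) / ?W * (q ^ ?c - 1)"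
    unfolding tele[OF lam] ..
  finally have bad: "Badj (col_prob1 q ?N) (fM q u ?N) lam = PP q u ?N * u ^ (?n - 1) * phi q ?N ?c * q ^ ?N / (q ^ ?N - 1) / ?W * (q ^ ?c - 1)" .
  have uu: "u * u ^ (?n - 1) * (q ^ ?c - 1) = u ^ ?n * (q ^ ?c - 1)"
  proof (cases "?n = 0")
    case True
    then have "lam = []" using partition_empty lam by blast
    then show ?thesis by simp
  next
    case False
    then show ?thesis by (cases ?n) auto
  qed
  have qN: "q ^ ?N > 1" using q by (intro one_less_power) auto
  have Wp: "?W > 0" using Wt_pos q by blast
  have ph: "phi q M ?c = phi q ?N ?c * (q ^ ?N - q ^ ?c) / (q ^ ?N - 1)"
    using phi_M[OF q, of M ?c] qN by (simp add: field_simps)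
  have hq: "h * q ^ ?N = u" using q by (simp add: h_def)
  have "h * Badj (col_prob1 q ?N) (fM q u ?N) lam
     = PP q u ?N * phi q ?N ?c / (q ^ ?N - 1) / ?W * ((h * q ^ ?N) * u ^ (?n - 1) * (q ^ ?c - 1))"
    unfolding bad by (simp add: field_simps)
  also have "\<dots> = PP q u ?N * phi q ?N ?c / (q ^ ?N - 1) / ?W * (u ^ ?n * (q ^ ?c - 1))"
    unfolding hq uu ..
  finally have hb: "h * Badj (col_prob1 q ?N) (fM q u ?N) lam = PP q u ?N * phi q ?N ?c / (q ^ ?N - 1) / ?W * (u ^ ?n * (q ^ ?c - 1))" .
  have PPN: "PP q u ?N = PP q u M * (1 - h)" by (simp add: PP_Suc h_def)
  show ?thesis
    unfolding hb fM_def ph PPN using qN Wp by (simp add: field_simps)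
qed

lemma L2:
  assumes q: "1 < q" and mu: "is_partition mu" and n: "0 < sum_list mu"
  shows "(\<Sum>s\<in>set mu. finf q u (\<Prod>r. 1 - u / q ^ Suc r) (remb mu s) * col_prob2 q (remb mu s) s) = Nuq u q mu"
proof -
  let ?P = "\<Prod>r. 1 - u / q ^ Suc r" and ?W = "Wt q (sum_list mu) mu"
  have "(\<Sum>s\<in>set mu. finf q u ?P (remb mu s) * col_prob2 q (remb mu s) s)
      = (\<Sum>s\<in>set mu. ?P * u ^ (sum_list mu - 1) * ((q ^ col mu s - q ^ col mu (Suc s)) / ?W))"
    by (rule sum.cong) (auto simp: term2[OF mu _ q])
  also have "\<dots> = ?P * u ^ (sum_list mu - 1) / ?W * (\<Sum>s\<in>set mu. q ^ col mu s - q ^ col mu (Suc s))"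
    by (simp add: sum_distrib_left sum_divide_distrib)
  also have "\<dots> = ?P * u ^ (sum_list mu - 1) / ?W * (q ^ col mu 1 - 1)"
    unfolding tele[OF mu] ..
  also have "\<dots> = Nuq u q mu"
    by (simp add: Nuq_def Wt_def)
  finally show ?thesis .
qed

lemma pzero1: "pzero (col_prob1 q N)"
  unfolding pzero_def
proof (intro allI impI)
  fix nu :: "nat list" and s :: nat
  assume "2 \<le> s" "s - 1 \<notin> set nu"
  then have "mult nu (s - 1) = 0" using mult_eq_0 by blast
  then have "col nu (s - 1) = col nu s" using col_mult[of nu "s - 1"] \<open>2 \<le> s\<close> by simp
  then show "col_prob1 q N nu s = 0" using \<open>2 \<le> s\<close> by (simp add: col_prob1_def)
qed

lemma pzero2: "pzero (col_prob2 q)"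
  unfolding pzero_def
proof (intro allI impI)
  fix nu :: "nat list" and s :: nat
  assume "2 \<le> s" "s - 1 \<notin> set nu"
  then have "mult nu (s - 1) = 0" using mult_eq_0 by blast
  then have "col nu (s - 1) = col nu s" using col_mult[of nu "s - 1"] \<open>2 \<le> s\<close> by simp
  then show "col_prob2 q nu s = 0" using \<open>2 \<le> s\<close> by (simp add: col_prob2_def)
qed

lemma box_op_eq: "box_op q N = Bop (col_prob1 q N)"
  by (intro ext) (simp add: box_op_def Bop_def)

lemma step2_op_eq: "step2_op q = Bop (col_prob2 q)"
  by (intro ext) (simp add: step2_op_def Bop_def)

lemma stage_eq:
  assumes "vanish n g"
  shows "stage_op q u N g x = (1 - u / q ^ N) * Eop (col_prob1 q N) (u / q ^ N) n g x"
proof -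
  let ?h = "u / q ^ N"
  have "stage_op q u N g x = (\<Sum>k\<le>n. ?h ^ k * (1 - ?h) * (Bop (col_prob1 q N) ^^ k) g x)"
    unfolding stage_op_def box_op_eq
  proof (rule suminf_finite)
    fix k assume "k \<notin> {..n}"
    then have "n < sum_list x + k" by simp
    then show "?h ^ k * (1 - ?h) * (Bop (col_prob1 q N) ^^ k) g x = 0"
      using Bop_pow_zero[OF assms] by simp
  qed simp
  also have "\<dots> = (1 - ?h) * Eop (col_prob1 q N) ?h n g x"
    unfolding Eop_def by (simp add: sum_distrib_left mult_ac)
  finally show ?thesis .
qed

lemma fM0: "is_partition lam \<Longrightarrow> fM q u 0 lam = (if lam = [] then 1 else 0)"
  using col1_pos[of lam] by (auto simp: fM_def PP_def phi_zero phi_0 Wt_def)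

lemma run_formula:
  assumes q: "1 < q"
  shows "vanish n g \<Longrightarrow> run_op q u M g [] = (\<Sum>lam\<in>PL n. fM q u M lam * g lam)"
proof (induction M arbitrary: g)
  case 0
  have e: "[] \<in> PL n" by (simp add: PL_def is_partition_def)
  have "(\<Sum>lam\<in>PL n. fM q u 0 lam * g lam) = (\<Sum>lam\<in>PL n. if lam = [] then g [] else 0)"
    by (rule sum.cong) (auto simp: fM0 PL_def)
  also have "\<dots> = g []" using e finite_PL by simp
  finally show ?case by simp
next
  case (Suc M)
  let ?h = "u / q ^ Suc M" and ?p = "col_prob1 q (Suc M)"
  have st: "stage_op q u (Suc M) g = (\<lambda>x. (1 - ?h) * Eop ?p ?h n g x)"
    using stage_eq[OF Suc.prems] by (intro ext) simp
  have v: "vanish n (stage_op q u (Suc M) g)"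
    unfolding st using Eop_vanish[OF Suc.prems] by (simp add: vanish_def)
  have "run_op q u (Suc M) g [] = (\<Sum>x\<in>PL n. fM q u M x * stage_op q u (Suc M) g x)"
    using Suc.IH[OF v] by simp
  also have "\<dots> = (\<Sum>x\<in>PL n. fM q u M x * ((1 - ?h) * Eop ?p ?h n g x))"
    unfolding st ..
  also have "\<dots> = (\<Sum>x\<in>PL n. fM q u (Suc M) x * g x)"
    by (rule stage_abstract[OF Suc.prems pzero1]) (use L1[OF q] in \<open>auto simp: PL_def\<close>)
  finally show ?case .
qed

lemma PP_lim:
  assumes q: "1 < q" and u: "0 < u"
  shows "(\<lambda>M. PP q u M) \<longlonglongrightarrow> (\<Prod>r. 1 - u / q ^ Suc r)"
proof -
  let ?f = "\<lambda>r. 1 - u / q ^ Suc r"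
  have "summable (\<lambda>i. u / q * (1 / q) ^ i)"
    using q by (intro summable_mult summable_geometric) auto
  moreover have "norm (?f i - 1) = u / q * (1 / q) ^ i" for i
    using q u by (simp add: power_one_over field_simps)
  ultimately have "summable (\<lambda>i. norm (?f i - 1))" by simp
  then have "convergent_prod ?f"
    by (intro abs_convergent_prod_imp_convergent_prod summable_imp_abs_convergent_prod)
  then have "(\<lambda>n. \<Prod>i\<le>n. ?f i) \<longlonglongrightarrow> prodinf ?f" by (rule convergent_prod_LIMSEQ)
  then have "(\<lambda>n. PP q u (Suc n)) \<longlonglongrightarrow> prodinf ?f"
    by (simp add: PP_def lessThan_Suc_atMost)
  then show ?thesis by (rule LIMSEQ_imp_Suc)
qed

lemma phi_lim:
  assumes q: "1 < q"
  shows "(\<lambda>M. phi q M c) \<longlonglongrightarrow> 1"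
proof -
  have z: "(\<lambda>M. 1 / q ^ (M - i)) \<longlonglongrightarrow> 0" for i
  proof -
    have "(\<lambda>k. (1 / q) ^ k) \<longlonglongrightarrow> 0" using q by (intro LIMSEQ_power_zero) auto
    then have "(\<lambda>M. (1 / q) ^ (M - i)) \<longlonglongrightarrow> 0"
      by (rule filterlim_compose) (rule filterlim_minus_const_nat_at_top)
    then show ?thesis by (simp add: power_one_over)
  qed
  have "(\<lambda>M. \<Prod>i<c. 1 - 1 / q ^ (M - i)) \<longlonglongrightarrow> (\<Prod>i<c. 1 - 0)"
    by (intro tendsto_prod tendsto_diff tendsto_const z)
  then show ?thesis by (simp add: phi_def)
qed

lemma fM_lim:
  assumes q: "1 < q" and u: "0 < u"
  shows "(\<lambda>M. fM q u M lam) \<longlonglongrightarrow> finf q u (\<Prod>r. 1 - u / q ^ Suc r) lam"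
proof -
  have "(\<lambda>M. PP q u M * u ^ sum_list lam * phi q M (col lam 1) / Wt q (sum_list lam) lam)
     \<longlonglongrightarrow> (\<Prod>r. 1 - u / q ^ Suc r) * u ^ sum_list lam * 1 / Wt q (sum_list lam) lam"
    using Wt_pos[OF q, of "sum_list lam" lam]
    by (intro tendsto_intros PP_lim[OF q u] phi_lim[OF q]) simp
  then show ?thesis by (simp add: fM_def finf_def)
qed

theorem theorem3p6:
  fixes q u :: real and mu :: "nat list"
  assumes "q > 1" and "0 < u" and "u < 1"
    and "is_partition mu" and "sum_list mu > 0"
  shows "(\<lambda>M. out_prob q u M mu) \<longlonglongrightarrow> Nuq u q mu"
proof -
  let ?n = "sum_list mu"
  define g0 where "g0 = (\<lambda>nu::nat list. if nu = mu then (1::real) else 0)"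
  have v0: "vanish ?n g0" by (auto simp: vanish_def g0_def)
  have v: "vanish (?n - 1) (step2_op q g0)"
    unfolding vanish_def step2_op_def
  proof (intro allI impI sum.neutral ballI)
    fix x :: "nat list" and s assume "?n - 1 < sum_list x"
    then have "add_box x s \<noteq> mu" using sum_list_add_box[of x s] by auto
    then show "col_prob2 q x s * g0 (add_box x s) = 0" by (simp add: g0_def)
  qed
  have mu_in: "mu \<in> PL ?n" using assms by (simp add: PL_def)
  have eq: "out_prob q u M mu = (\<Sum>s\<in>set mu. fM q u M (remb mu s) * col_prob2 q (remb mu s) s)" for M
  proof -
    have "out_prob q u M mu = (\<Sum>x\<in>PL (?n - 1). fM q u M x * Bop (col_prob2 q) g0 x)"
      unfolding out_prob_def g0_def[symmetric] using run_formula[OF assms(1) v] step2_op_eq by simp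
    also have "\<dots> = (\<Sum>lam\<in>PL (Suc (?n - 1)). Badj (col_prob2 q) (fM q u M) lam * g0 lam)"
      by (rule adjoint[OF pzero2])
    also have "Suc (?n - 1) = ?n" using assms by simp
    also have "(\<Sum>lam\<in>PL ?n. Badj (col_prob2 q) (fM q u M) lam * g0 lam)
        = (\<Sum>lam\<in>PL ?n. if lam = mu then Badj (col_prob2 q) (fM q u M) mu else 0)"
      by (rule sum.cong) (auto simp: g0_def)
    also have "\<dots> = Badj (col_prob2 q) (fM q u M) mu" using mu_in finite_PL by simp
    finally show ?thesis by (simp add: Badj_def)
  qed
  have "(\<lambda>M. \<Sum>s\<in>set mu. fM q u M (remb mu s) * col_prob2 q (remb mu s) s)
     \<longlonglongrightarrow> (\<Sum>s\<in>set mu. finf q u (\<Prod>r. 1 - u / q ^ Suc r) (remb mu s) * col_prob2 q (remb mu s) s)"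
    by (intro tendsto_sum tendsto_mult_right fM_lim assms)
  then show ?thesis unfolding eq L2[OF assms(1,4,5)] .
qed

end
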